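(* Let $(Y_n)_{n\ge1}$ be i.i.d. Gaussian with positive variance. Let $\rho\in(0,1)$ and let $(\alpha_n)_{n\ge0}$ be a sequence of positive numbers such that $\alpha_{n+m}\le C\alpha_n\alpha_m$ for all $n,m\ge0$ (for some constant $C$) and $\lim_{n\to\infty}e^{-\lambda n}\alpha_n=0$ for every $\lambda>0$. Let $X_n:=\sum_{k=1}^n\alpha_{n-k}\rho^{n-k}Y_k$. Then for every $x\in\mathbb{R}$, $$\liminf_{N\to\infty}-N^{-1}\log\mathbb{P}\Big(\sup_{n=1,\dots,N}X_n\le x\Big)>0 .$$ *)

theory Defs
  imports "HOL-Probability.Probability"
begin

end

theory Submission
  imports Defs
begin

lemma tilt:
  fixes \<mu> \<sigma> g y :: real assumes "\<sigma> > 0"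
  shows "exp (- g * y) * normal_density \<mu> \<sigma> y
       = exp (- g * \<mu> + g^2 * \<sigma>^2 / 2) * normal_density (\<mu> - g * \<sigma>^2) \<sigma> y"
proof -
  have e: "- g * y + (-(y - \<mu>)\<^sup>2 / (2 * \<sigma>\<^sup>2)) = (- g * \<mu> + g^2 * \<sigma>^2 / 2) + (-(y - (\<mu> - g * \<sigma>^2))\<^sup>2 / (2 * \<sigma>\<^sup>2))"
    using assms by (simp add: field_simps power2_eq_square)
  have "exp (- g * y) * exp (-(y - \<mu>)\<^sup>2 / (2 * \<sigma>\<^sup>2)) = exp (- g * y + (-(y - \<mu>)\<^sup>2 / (2 * \<sigma>\<^sup>2)))"
    by (rule exp_add[symmetric])
  also have "\<dots> = exp (- g * \<mu> + g^2 * \<sigma>^2 / 2) * exp (-(y - (\<mu> - g * \<sigma>^2))\<^sup>2 / (2 * \<sigma>\<^sup>2))"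
    unfolding e by (rule exp_add)
  finally show ?thesis unfolding normal_density_def by (simp add: algebra_simps)
qed

lemma shift:
  fixes m s \<sigma> :: real
  shows "emeasure (density lborel (normal_density m \<sigma>)) {..m+s} = emeasure (density lborel (normal_density 0 \<sigma>)) {..s}"
proof -
  have "emeasure (density lborel (normal_density m \<sigma>)) {..m+s} = (\<integral>\<^sup>+x. ennreal (normal_density m \<sigma> x) * indicator {..m+s} x \<partial>lborel)"
    by (simp add: emeasure_density)
  also have "\<dots> = (\<integral>\<^sup>+x. ennreal (normal_density m \<sigma> (m + 1 * x)) * indicator {..m+s} (m + 1 * x) \<partial>lborel)"
    by (subst nn_integral_real_affine[where c=1 and t=m]) auto
  also have "\<dots> = (\<integral>\<^sup>+x. ennreal (normal_density 0 \<sigma> x) * indicator {..s} x \<partial>lborel)"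
    by (intro nn_integral_cong) (simp add: normal_density_def indicator_def)
  also have "\<dots> = emeasure (density lborel (normal_density 0 \<sigma>)) {..s}"
    by (simp add: emeasure_density)
  finally show ?thesis .
qed

lemma pos_interval:
  fixes m \<sigma> a b :: real assumes "\<sigma> > 0" "a < b"
  shows "emeasure (density lborel (normal_density m \<sigma>)) {a<..<b} > 0"
proof (rule ccontr)
  have nz: "\<And>x. normal_density m \<sigma> x \<noteq> 0" using normal_density_pos[OF assms(1)] by (metis less_irrefl)
  assume "\<not> ?thesis"
  then have "(\<integral>\<^sup>+x. ennreal (normal_density m \<sigma> x) * indicator {a<..<b} x \<partial>lborel) = 0"
    by (simp add: emeasure_density)
  then have "AE x in lborel. ennreal (normal_density m \<sigma> x) * indicator {a<..<b} x = 0"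
    by (subst (asm) nn_integral_0_iff_AE) auto
  then have "AE x in lborel. x \<notin> {a<..<b}"
    using nz by (elim AE_mp) (auto intro!: AE_I2 simp: indicator_def)
  then have "emeasure lborel {x\<in>space lborel. \<not> x \<notin> {a<..<b}} = 0"
    by (subst (asm) AE_iff_measurable[OF _ refl]) auto
  moreover have "{x\<in>space lborel. \<not> x \<notin> {a<..<b}} = {a<..<b}" by auto
  ultimately show False using assms by (simp add: emeasure_lborel_Ioo)
qed

lemma shift_measure:
  fixes m s \<sigma> :: real
  shows "measure (density lborel (normal_density m \<sigma>)) {..m+s} = measure (density lborel (normal_density 0 \<sigma>)) {..s}"
  unfolding measure_def using shift by simp

lemma step_bound:
  fixes \<mu> \<sigma> a0 \<epsilon> x \<beta> R h :: real
  assumes \<sigma>: "\<sigma> > 0" and a0: "a0 > 0" and \<epsilon>: "\<epsilon> > 0" and h: "h \<ge> 0"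
  shows "ennreal (exp (\<epsilon> * R)) * (\<integral>\<^sup>+t. ennreal ((if a0 * t + R \<le> x then 1 else 0) * exp (- \<beta> * t)) \<partial>density lborel (normal_density \<mu> \<sigma>))
    \<le> ennreal (exp (\<epsilon> * x) * exp (- (\<beta> + \<epsilon> * a0) * \<mu> + (\<beta> + \<epsilon> * a0)^2 * \<sigma>^2 / 2)
        * max (measure (density lborel (normal_density 0 \<sigma>)) {..h})
              (1 - (1 - exp (- (\<epsilon> * a0 * h))) * measure (density lborel (normal_density 0 \<sigma>)) {..0}))"
proof -
  define \<gamma> where "\<gamma> = \<beta> + \<epsilon> * a0"
  define m' where "m' = \<mu> - \<gamma> * \<sigma>^2"
  define u where "u = (x - R) / a0"
  define c where "c = 1 - exp (- (\<epsilon> * a0 * h))"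
  define E where "E = exp (\<epsilon> * x) * exp (- \<gamma> * \<mu> + \<gamma>^2 * \<sigma>^2 / 2)"
  define g where "g t = indicator {..u} t - c * indicator {..u-h} t" for t :: real
  define N0 where "N0 = density lborel (normal_density 0 \<sigma>)"
  define N' where "N' = density lborel (normal_density m' \<sigma>)"
  define q where "q = max (measure N0 {..h}) (1 - c * measure N0 {..0})"
  interpret N': prob_space N' unfolding N'_def by (rule prob_space_normal_density[OF \<sigma>])
  interpret N0: prob_space N0 unfolding N0_def by (rule prob_space_normal_density[OF \<sigma>])
  have c01: "0 \<le> c" "c \<le> 1" using a0 \<epsilon> h by (auto simp: c_def mult_nonneg_nonneg)
  have g0: "0 \<le> g t" for t using c01 h by (auto simp: g_def indicator_def)
  have E0: "0 \<le> E" by (simp add: E_def)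
  have [measurable]: "g \<in> borel_measurable borel" unfolding g_def by measurable
  have spN': "space N' = UNIV" by (simp add: N'_def)
  have setsN': "{..v} \<in> sets N'" for v by (simp add: N'_def)
  have ii: "integrable N' (indicat_real {..v})" for v
    by (intro integrable_real_indicator setsN') (simp add: less_top[symmetric] N'.emeasure_finite)
  have pw: "exp (\<epsilon> * R) * (normal_density \<mu> \<sigma> t * ((if a0 * t + R \<le> x then 1 else 0) * exp (- \<beta> * t)))
      \<le> E * (normal_density m' \<sigma> t * g t)" for t
  proof -
    have eq: "E * (normal_density m' \<sigma> t * g t) = normal_density \<mu> \<sigma> t * (exp (\<epsilon> * x) * exp (- \<gamma> * t) * g t)"
      using tilt[OF \<sigma>, of \<gamma> t \<mu>] unfolding E_def m'_def by (simp add: algebra_simps)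
    have "exp (\<epsilon> * R) * ((if a0 * t + R \<le> x then 1 else 0) * exp (- \<beta> * t)) \<le> exp (\<epsilon> * x) * exp (- \<gamma> * t) * g t"
    proof (cases "t \<le> u")
      case True
      then have le: "a0 * t \<le> x - R" using a0 unfolding u_def by (simp add: field_simps)
      show ?thesis
      proof (cases "t \<le> u - h")
        case True
        then have le2: "a0 * (t + h) \<le> x - R" using a0 unfolding u_def by (simp add: field_simps)
        have "g t = exp (- (\<epsilon> * a0 * h))" using True h unfolding g_def c_def by (simp add: indicator_def)
        then have "exp (\<epsilon> * x) * exp (- \<gamma> * t) * g t = exp (\<epsilon> * x - \<gamma> * t - \<epsilon> * a0 * h)"
          by (simp add: exp_add[symmetric] exp_diff)
        moreover have "exp (\<epsilon> * R) * ((if a0 * t + R \<le> x then 1 else 0) * exp (- \<beta> * t)) = exp (\<epsilon> * R - \<beta> * t)"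
          using le by (simp add: exp_diff exp_minus field_simps)
        moreover have "\<epsilon> * R - \<beta> * t \<le> \<epsilon> * x - \<gamma> * t - \<epsilon> * a0 * h"
        proof -
          have "\<epsilon> * (a0 * (t + h)) \<le> \<epsilon> * (x - R)" using le2 \<epsilon> by (simp add: mult_left_mono)
          then show ?thesis unfolding \<gamma>_def by (simp add: algebra_simps)
        qed
        ultimately show ?thesis by simp
      next
        case False
        have "g t = 1" using False \<open>t \<le> u\<close> unfolding g_def by (simp add: indicator_def)
        then have "exp (\<epsilon> * x) * exp (- \<gamma> * t) * g t = exp (\<epsilon> * x - \<gamma> * t)"
          by (simp add: exp_add[symmetric])
        moreover have "exp (\<epsilon> * R) * ((if a0 * t + R \<le> x then 1 else 0) * exp (- \<beta> * t)) = exp (\<epsilon> * R - \<beta> * t)"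
          using le by (simp add: exp_diff exp_minus field_simps)
        moreover have "\<epsilon> * R - \<beta> * t \<le> \<epsilon> * x - \<gamma> * t"
        proof -
          have "\<epsilon> * (a0 * t) \<le> \<epsilon> * (x - R)" using le \<epsilon> by (simp add: mult_left_mono)
          then show ?thesis unfolding \<gamma>_def by (simp add: algebra_simps)
        qed
        ultimately show ?thesis by simp
      qed
    next
      case False
      then have "\<not> a0 * t + R \<le> x" using a0 unfolding u_def by (simp add: field_simps)
      moreover have "g t = 0" using False h unfolding g_def by (simp add: indicator_def)
      ultimately show ?thesis by simp
    qed
    then have "normal_density \<mu> \<sigma> t * (exp (\<epsilon> * R) * ((if a0 * t + R \<le> x then 1 else 0) * exp (- \<beta> * t)))
       \<le> normal_density \<mu> \<sigma> t * (exp (\<epsilon> * x) * exp (- \<gamma> * t) * g t)"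
      by (rule mult_left_mono) simp
    then show ?thesis unfolding eq by (simp add: algebra_simps)
  qed
  have rq: "measure N' {..u} - c * measure N' {..u-h} \<le> q"
  proof (cases "u \<le> m' + h")
    case True
    have "measure N' {..u} \<le> measure N' {..m'+h}" using True by (intro N'.finite_measure_mono) (auto simp: setsN')
    also have "\<dots> = measure N0 {..h}" unfolding N'_def N0_def by (rule shift_measure)
    finally have "measure N' {..u} \<le> measure N0 {..h}" .
    moreover have "0 \<le> c * measure N' {..u-h}" using c01 by simp
    ultimately show ?thesis unfolding q_def by (simp add: le_max_iff_disj)
  next
    case False
    have "measure N0 {..0} = measure N' {..m'+0}" unfolding N'_def N0_def by (rule shift_measure[symmetric])
    also have "\<dots> \<le> measure N' {..u-h}" using False by (intro N'.finite_measure_mono) (auto simp: setsN')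
    finally have "c * measure N0 {..0} \<le> c * measure N' {..u-h}" using c01 by (simp add: mult_left_mono)
    moreover have "measure N' {..u} \<le> 1" by simp
    ultimately have "measure N' {..u} - c * measure N' {..u-h} \<le> 1 - c * measure N0 {..0}" by linarith
    then show ?thesis unfolding q_def by (simp add: le_max_iff_disj)
  qed
  have "ennreal (exp (\<epsilon> * R)) * (\<integral>\<^sup>+t. ennreal ((if a0 * t + R \<le> x then 1 else 0) * exp (- \<beta> * t)) \<partial>density lborel (normal_density \<mu> \<sigma>))
      = ennreal (exp (\<epsilon> * R)) * (\<integral>\<^sup>+t. ennreal (normal_density \<mu> \<sigma> t) * ennreal ((if a0 * t + R \<le> x then 1 else 0) * exp (- \<beta> * t)) \<partial>lborel)"
    by (subst nn_integral_density) auto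
  also have "\<dots> = (\<integral>\<^sup>+t. ennreal (exp (\<epsilon> * R) * (normal_density \<mu> \<sigma> t * ((if a0 * t + R \<le> x then 1 else 0) * exp (- \<beta> * t)))) \<partial>lborel)"
    by (subst nn_integral_cmult[symmetric]) (auto simp: ennreal_mult[symmetric])
  also have "\<dots> \<le> (\<integral>\<^sup>+t. ennreal (E * (normal_density m' \<sigma> t * g t)) \<partial>lborel)"
    by (intro nn_integral_mono ennreal_leI pw)
  also have "\<dots> = ennreal E * (\<integral>\<^sup>+t. ennreal (normal_density m' \<sigma> t) * ennreal (g t) \<partial>lborel)"
    using E0 g0 by (subst nn_integral_cmult[symmetric]) (auto simp: ennreal_mult)
  also have "(\<integral>\<^sup>+t. ennreal (normal_density m' \<sigma> t) * ennreal (g t) \<partial>lborel) = (\<integral>\<^sup>+t. ennreal (g t) \<partial>N')"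
    unfolding N'_def by (subst nn_integral_density) auto
  also have "\<dots> = ennreal (\<integral>t. g t \<partial>N')"
  proof (rule nn_integral_eq_integral)
    show "integrable N' g" unfolding g_def by (intro Bochner_Integration.integrable_diff integrable_mult_right ii)
  qed (use g0 in auto)
  also have "(\<integral>t. g t \<partial>N') = measure N' {..u} - c * measure N' {..u-h}"
    unfolding g_def by (subst Bochner_Integration.integral_diff) (auto simp: ii spN')
  also have "ennreal (measure N' {..u} - c * measure N' {..u-h}) \<le> ennreal q"
    using rq by (rule ennreal_leI)
  finally have fin: "ennreal (exp (\<epsilon> * R)) * (\<integral>\<^sup>+t. ennreal ((if a0 * t + R \<le> x then 1 else 0) * exp (- \<beta> * t)) \<partial>density lborel (normal_density \<mu> \<sigma>)) \<le> ennreal E * ennreal q"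
    by (simp add: mult_left_mono)
  have "q \<ge> 0" unfolding q_def by (simp add: max.coboundedI1)
  then have "ennreal E * ennreal q = ennreal (E * q)" using E0 by (simp add: ennreal_mult)
  with fin show ?thesis unfolding E_def q_def \<gamma>_def c_def N0_def by simp
qed

lemma comp_meas:
  assumes "sets Nd = sets borel" "k \<in> I"
  shows "(\<lambda>y. y k) \<in> borel_measurable (PiM I (\<lambda>_. Nd))"
proof -
  have "(\<lambda>y. y k) \<in> measurable (PiM I (\<lambda>_. Nd)) Nd" using assms(2) by (rule measurable_component_singleton)
  then show ?thesis by (subst (asm) measurable_cong_sets[OF refl assms(1)])
qed

lemma G_meas:
  fixes a :: "nat \<Rightarrow> real"
  assumes "sets Nd = sets borel"
  shows "(\<lambda>y. (\<Prod>m\<in>{1..n}. if (\<Sum>k\<in>{1..m}. a (m-k) * y k) \<le> x then 1 else 0) * exp (- \<epsilon> * (\<Sum>m\<in>{n+1..N}. \<Sum>k\<in>{1..n}. a (m-k) * y k)))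
     \<in> borel_measurable (PiM {1..n} (\<lambda>_. Nd))"
proof -
  have c: "(\<lambda>y. y k) \<in> borel_measurable (PiM {1..n} (\<lambda>_. Nd))" if "k \<in> {1..n}" for k
    using comp_meas[OF assms that] .
  have s: "(\<lambda>y. \<Sum>k\<in>{1..m}. a (m-k) * y k) \<in> borel_measurable (PiM {1..n} (\<lambda>_. Nd))" if "m \<le> n" for m
    using that by (intro borel_measurable_sum borel_measurable_times borel_measurable_const c) auto
  have p: "(\<lambda>y. \<Prod>m\<in>{1..n}. if (\<Sum>k\<in>{1..m}. a (m-k) * y k) \<le> x then (1::real) else 0) \<in> borel_measurable (PiM {1..n} (\<lambda>_. Nd))"
  proof (rule borel_measurable_prod)
    fix m assume "m \<in> {1..n}"
    then have "m \<le> n" by simp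
    show "(\<lambda>y. if (\<Sum>k\<in>{1..m}. a (m-k) * y k) \<le> x then (1::real) else 0) \<in> borel_measurable (PiM {1..n} (\<lambda>_. Nd))"
      by (rule measurable_If[OF borel_measurable_const borel_measurable_const borel_measurable_le[OF s[OF \<open>m \<le> n\<close>] borel_measurable_const]])
  qed
  have e: "(\<lambda>y. \<Sum>m\<in>{n+1..N}. \<Sum>k\<in>{1..n}. a (m-k) * y k) \<in> borel_measurable (PiM {1..n} (\<lambda>_. Nd))"
  proof (rule borel_measurable_sum)
    fix m show "(\<lambda>y. \<Sum>k\<in>{1..n}. a (m-k) * y k) \<in> borel_measurable (PiM {1..n} (\<lambda>_. Nd))"
    proof (rule borel_measurable_sum)
      fix k assume "k \<in> {1..n}"
      then show "(\<lambda>y. a (m-k) * y k) \<in> borel_measurable (PiM {1..n} (\<lambda>_. Nd))"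
        by (intro borel_measurable_times borel_measurable_const c)
    qed
  qed
  have ex: "(\<lambda>z::real. exp (- \<epsilon> * z)) \<in> borel_measurable borel" by measurable
  show ?thesis
    by (rule borel_measurable_times[OF p measurable_compose[OF e ex]])
qed

lemma G_step:
  fixes a :: "nat \<Rightarrow> real" and y :: "nat \<Rightarrow> real" and \<epsilon> x t :: real
  assumes N: "Suc n \<le> N"
  shows "(\<Prod>m\<in>{1..Suc n}. if (\<Sum>k\<in>{1..m}. a (m-k) * (y(Suc n := t)) k) \<le> x then 1 else 0) * exp (- \<epsilon> * (\<Sum>m\<in>{Suc n+1..N}. \<Sum>k\<in>{1..Suc n}. a (m-k) * (y(Suc n := t)) k))
    = ((\<Prod>m\<in>{1..n}. if (\<Sum>k\<in>{1..m}. a (m-k) * y k) \<le> x then 1 else 0) * exp (- \<epsilon> * (\<Sum>m\<in>{n+1..N}. \<Sum>k\<in>{1..n}. a (m-k) * y k)))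
      * (exp (\<epsilon> * (\<Sum>k\<in>{1..n}. a (Suc n - k) * y k)) * ((if a 0 * t + (\<Sum>k\<in>{1..n}. a (Suc n - k) * y k) \<le> x then 1 else 0) * exp (- (\<epsilon> * (\<Sum>m\<in>{Suc n+1..N}. a (m - Suc n))) * t)))"
proof -
  define y' where "y' = y(Suc n := t)"
  define R where "R = (\<Sum>k\<in>{1..n}. a (Suc n - k) * y k)"
  define P where "P = (\<Prod>m\<in>{1..n}. if (\<Sum>k\<in>{1..m}. a (m-k) * y k) \<le> x then 1 else (0::real))"
  define E' where "E' = (\<Sum>m\<in>{Suc n+1..N}. \<Sum>k\<in>{1..n}. a (m-k) * y k)"
  define B where "B = (\<Sum>m\<in>{Suc n+1..N}. a (m - Suc n))"
  have s1: "(\<Sum>k\<in>{1..m}. a (m-k) * y' k) = (\<Sum>k\<in>{1..m}. a (m-k) * y k)" if "m \<le> n" for m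
    using that by (intro sum.cong) (auto simp: y'_def)
  have s1': "(\<Sum>k\<in>{1..n}. a (m-k) * y' k) = (\<Sum>k\<in>{1..n}. a (m-k) * y k)" for m
    by (intro sum.cong) (auto simp: y'_def)
  have s2: "(\<Sum>k\<in>{1..Suc n}. a (m-k) * y' k) = (\<Sum>k\<in>{1..n}. a (m-k) * y k) + a (m - Suc n) * t" for m
    by (simp add: sum.cl_ivl_Suc s1' y'_def)
  have p: "(\<Prod>m\<in>{1..Suc n}. if (\<Sum>k\<in>{1..m}. a (m-k) * y' k) \<le> x then 1 else (0::real))
      = P * (if a 0 * t + R \<le> x then 1 else 0)"
  proof -
    have "(\<Prod>m\<in>{1..n}. if (\<Sum>k\<in>{1..m}. a (m-k) * y' k) \<le> x then 1 else (0::real)) = P"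
      unfolding P_def by (intro prod.cong refl, subst s1) auto
    moreover have "(\<Sum>k\<in>{1..Suc n}. a (Suc n-k) * y' k) = a 0 * t + R"
      unfolding s2 R_def by simp
    ultimately show ?thesis by (simp add: prod.cl_ivl_Suc)
  qed
  have e1: "(\<Sum>m\<in>{Suc n+1..N}. \<Sum>k\<in>{1..Suc n}. a (m-k) * y' k) = E' + t * B"
    unfolding s2 E'_def B_def by (simp add: sum.distrib sum_distrib_left mult.commute)
  have e0: "(\<Sum>m\<in>{n+1..N}. \<Sum>k\<in>{1..n}. a (m-k) * y k) = R + E'"
    unfolding R_def E'_def using N by (simp add: sum.atLeast_Suc_atMost)
  have ar: "- \<epsilon> * (E' + t * B) = - \<epsilon> * (R + E') + \<epsilon> * R + - (\<epsilon> * B) * t" by (simp add: algebra_simps)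
  have ex: "exp (- \<epsilon> * (E' + t * B)) = exp (- \<epsilon> * (R + E')) * exp (\<epsilon> * R) * exp (- (\<epsilon> * B) * t)"
    unfolding ar by (simp only: exp_add)
  show ?thesis
    unfolding y'_def[symmetric] p e1 e0 ex unfolding R_def[symmetric] P_def[symmetric] B_def[symmetric]
    by (simp add: algebra_simps)
qed

lemma prod_bound:
  fixes a :: "nat \<Rightarrow> real" and N :: nat and \<epsilon> x \<theta> :: real and Nd :: "real measure"
  assumes Nd: "prob_space Nd" "sets Nd = sets borel"
    and \<theta>: "\<theta> \<ge> 0"
    and H: "\<And>n R. n \<in> {1..N} \<Longrightarrow> ennreal (exp (\<epsilon> * R)) * (\<integral>\<^sup>+t. ennreal ((if a 0 * t + R \<le> x then 1 else 0) * exp (- (\<epsilon> * (\<Sum>m\<in>{n+1..N}. a (m - n))) * t)) \<partial>Nd) \<le> ennreal \<theta>"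
  shows "n \<le> N \<Longrightarrow> (\<integral>\<^sup>+y. ennreal ((\<Prod>m\<in>{1..n}. if (\<Sum>k\<in>{1..m}. a (m-k) * y k) \<le> x then 1 else 0) * exp (- \<epsilon> * (\<Sum>m\<in>{n+1..N}. \<Sum>k\<in>{1..n}. a (m-k) * y k))) \<partial>PiM {1..n} (\<lambda>_. Nd)) \<le> ennreal (\<theta>^n)"
proof (induction n)
  case 0
  interpret P: prob_space "PiM {} (\<lambda>_. Nd)" by (rule prob_space_PiM) (use Nd in auto)
  show ?case by (simp add: P.emeasure_space_1)
next
  case (Suc n)
  define G where "G n y = (\<Prod>m\<in>{1..n}. if (\<Sum>k\<in>{1..m}. a (m-k) * y k) \<le> x then 1 else (0::real)) * exp (- \<epsilon> * (\<Sum>m\<in>{n+1..N}. \<Sum>k\<in>{1..n}. a (m-k) * y k))" for n y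
  define R where "R y = (\<Sum>k\<in>{1..n}. a (Suc n - k) * y k)" for y :: "nat \<Rightarrow> real"
  define F where "F r t = exp (\<epsilon> * r) * ((if a 0 * t + r \<le> x then 1 else 0) * exp (- (\<epsilon> * (\<Sum>m\<in>{Suc n+1..N}. a (m - Suc n))) * t))" for r t :: real
  interpret ps: product_sigma_finite "\<lambda>_. Nd"
    unfolding product_sigma_finite_def using Nd(1) by (simp add: prob_space_imp_sigma_finite)
  have G0: "0 \<le> G n y" for n y unfolding G_def by (intro mult_nonneg_nonneg prod_nonneg) auto
  have F0: "0 \<le> F r t" for r t unfolding F_def by auto
  have Gm: "G k \<in> borel_measurable (PiM {1..k} (\<lambda>_. Nd))" for k
    unfolding G_def by (rule G_meas[OF Nd(2)])
  have Gm': "(\<lambda>y. ennreal (G k y)) \<in> borel_measurable (PiM {1..k} (\<lambda>_. Nd))" for k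
    by (rule measurable_compose[OF Gm[of k]]) simp
  have ins: "{1..Suc n} = insert (Suc n) {1..n}" by auto
  have "(\<integral>\<^sup>+y. ennreal (G (Suc n) y) \<partial>PiM {1..Suc n} (\<lambda>_. Nd))
      = (\<integral>\<^sup>+y. (\<integral>\<^sup>+t. ennreal (G (Suc n) (y(Suc n := t))) \<partial>Nd) \<partial>PiM {1..n} (\<lambda>_. Nd))"
    unfolding ins by (rule ps.product_nn_integral_insert) (use Gm[of "Suc n"] ins in auto)
  also have "\<dots> = (\<integral>\<^sup>+y. ennreal (G n y) * (\<integral>\<^sup>+t. ennreal (F (R y) t) \<partial>Nd) \<partial>PiM {1..n} (\<lambda>_. Nd))"
  proof (intro nn_integral_cong)
    fix y :: "nat \<Rightarrow> real"
    have "(\<integral>\<^sup>+t. ennreal (G (Suc n) (y(Suc n := t))) \<partial>Nd) = (\<integral>\<^sup>+t. ennreal (G n y) * ennreal (F (R y) t) \<partial>Nd)"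
    proof (intro nn_integral_cong)
      fix t
      have "G (Suc n) (y(Suc n := t)) = G n y * F (R y) t"
        unfolding G_def F_def R_def by (rule G_step[OF Suc.prems])
      then show "ennreal (G (Suc n) (y(Suc n := t))) = ennreal (G n y) * ennreal (F (R y) t)"
        by (simp add: ennreal_mult G0 F0)
    qed
    also have "\<dots> = ennreal (G n y) * (\<integral>\<^sup>+t. ennreal (F (R y) t) \<partial>Nd)"
      by (rule nn_integral_cmult) (simp add: F_def measurable_cong_sets[OF Nd(2) refl])
    finally show "(\<integral>\<^sup>+t. ennreal (G (Suc n) (y(Suc n := t))) \<partial>Nd) = ennreal (G n y) * (\<integral>\<^sup>+t. ennreal (F (R y) t) \<partial>Nd)" .
  qed
  also have "\<dots> \<le> (\<integral>\<^sup>+y. ennreal (G n y) * ennreal \<theta> \<partial>PiM {1..n} (\<lambda>_. Nd))"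
  proof (intro nn_integral_mono mult_left_mono)
    fix y :: "nat \<Rightarrow> real"
    have "(\<integral>\<^sup>+t. ennreal (F (R y) t) \<partial>Nd) = ennreal (exp (\<epsilon> * R y)) * (\<integral>\<^sup>+t. ennreal ((if a 0 * t + R y \<le> x then 1 else 0) * exp (- (\<epsilon> * (\<Sum>m\<in>{Suc n+1..N}. a (m - Suc n))) * t)) \<partial>Nd)"
      unfolding F_def by (subst nn_integral_cmult[symmetric]) (auto simp: ennreal_mult measurable_cong_sets[OF Nd(2) refl])
    also have "\<dots> \<le> ennreal \<theta>" using H[of "Suc n" "R y"] Suc.prems by simp
    finally show "(\<integral>\<^sup>+t. ennreal (F (R y) t) \<partial>Nd) \<le> ennreal \<theta>" .
  qed simp
  also have "\<dots> = ennreal \<theta> * (\<integral>\<^sup>+y. ennreal (G n y) \<partial>PiM {1..n} (\<lambda>_. Nd))"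
    by (subst nn_integral_multc[OF Gm'[of n]]) (simp add: mult.commute)
  also have "\<dots> \<le> ennreal \<theta> * ennreal (\<theta> ^ n)"
    using Suc.IH Suc.prems unfolding G_def by (intro mult_left_mono) auto
  also have "\<dots> = ennreal (\<theta> ^ Suc n)" using \<theta> by (simp add: ennreal_mult)
  finally show ?case unfolding G_def .
qed

lemma final_ineq:
  fixes \<gamma> \<epsilon> S \<sigma> a0 h p1 Ph x \<mu> D :: real
  assumes g: "0 \<le> \<gamma>" "\<gamma> \<le> \<epsilon> * S" and e: "\<epsilon> > 0" and S: "S \<ge> 0"
    and a0: "a0 > 0" and h: "h > 0" and p1: "p1 \<ge> 0" and Ph: "Ph \<ge> 0"
    and D: "D = \<bar>x\<bar> + S * \<bar>\<mu>\<bar>"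
    and c1: "\<epsilon> * (S^2 * \<sigma>^2 / 2) \<le> 1" and c2: "\<epsilon> * a0 * h \<le> 1"
    and c3: "\<epsilon> * (D + 2) \<le> 1 - Ph" and c4: "a0 * h * p1 = 2 * (D + 2)"
  shows "exp (\<epsilon> * x) * exp (- \<gamma> * \<mu> + \<gamma>^2 * \<sigma>^2 / 2) * max Ph (1 - (1 - exp (- (\<epsilon> * a0 * h))) * p1) \<le> exp (- \<epsilon>)"
proof -
  have ex: "\<epsilon> * x \<le> \<epsilon> * \<bar>x\<bar>" using e by (intro mult_left_mono) auto
  have em: "- \<gamma> * \<mu> \<le> \<epsilon> * (S * \<bar>\<mu>\<bar>)"
  proof -
    have "\<gamma> * (- \<mu>) \<le> \<gamma> * \<bar>\<mu>\<bar>" using g by (intro mult_left_mono) auto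
    then have "- \<gamma> * \<mu> \<le> \<gamma> * \<bar>\<mu>\<bar>" by simp
    also have "\<dots> \<le> (\<epsilon> * S) * \<bar>\<mu>\<bar>" using g by (intro mult_right_mono) auto
    finally show ?thesis by simp
  qed
  have eg: "\<gamma>^2 * \<sigma>^2 / 2 \<le> \<epsilon>"
  proof -
    have "\<gamma>^2 \<le> (\<epsilon> * S)^2" using g by (simp add: power_mono)
    then have "\<gamma>^2 * \<sigma>^2 / 2 \<le> (\<epsilon> * S)^2 * \<sigma>^2 / 2" by (intro divide_right_mono mult_right_mono) auto
    also have "\<dots> = \<epsilon> * (\<epsilon> * (S^2 * \<sigma>^2 / 2))" by (simp add: power2_eq_square)
    also have "\<dots> \<le> \<epsilon> * 1" using c1 e by (intro mult_left_mono) auto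
    finally show ?thesis by simp
  qed
  have A: "\<epsilon> * x + (- \<gamma> * \<mu> + \<gamma>^2 * \<sigma>^2 / 2) \<le> \<epsilon> * D + \<epsilon>" using ex em eg D by (simp add: algebra_simps)
  define t where "t = \<epsilon> * a0 * h"
  have t: "0 < t" "t \<le> 1" using e a0 h c2 by (auto simp: t_def)
  have "exp (- t) \<le> 1 / (1 + t)"
  proof -
    have "1 + t \<le> exp t" by simp
    then have "1 / exp t \<le> 1 / (1 + t)" using t by (intro divide_left_mono) auto
    then show ?thesis by (simp add: exp_minus field_simps)
  qed
  then have "1 - exp (- t) \<ge> t / (1 + t)" using t by (simp add: field_simps)
  moreover have "t / (1 + t) \<ge> t / 2" using t by (intro divide_left_mono) auto
  ultimately have "1 - exp (- t) \<ge> t / 2" by linarith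
  then have "(1 - exp (- t)) * p1 \<ge> t / 2 * p1" using p1 by (intro mult_right_mono) auto
  moreover have "t / 2 * p1 = \<epsilon> * (D + 2)" using c4 unfolding t_def by (simp add: algebra_simps)
  ultimately have q0: "(1 - exp (- t)) * p1 \<ge> \<epsilon> * (D + 2)" by linarith
  have q1: "1 - (1 - exp (- (\<epsilon> * a0 * h))) * p1 \<le> 1 - \<epsilon> * (D + 2)" using q0 unfolding t_def by linarith
  have q: "max Ph (1 - (1 - exp (- (\<epsilon> * a0 * h))) * p1) \<le> exp (- (\<epsilon> * (D + 2)))"
  proof -
    have "max Ph (1 - (1 - exp (- (\<epsilon> * a0 * h))) * p1) \<le> 1 - \<epsilon> * (D + 2)" using q1 c3 by simp
    also have "\<dots> \<le> exp (- (\<epsilon> * (D + 2)))" using exp_ge_add_one_self[of "- (\<epsilon> * (D + 2))"] by simp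
    finally show ?thesis .
  qed
  have "exp (\<epsilon> * x) * exp (- \<gamma> * \<mu> + \<gamma>^2 * \<sigma>^2 / 2) = exp (\<epsilon> * x + (- \<gamma> * \<mu> + \<gamma>^2 * \<sigma>^2 / 2))"
    by (simp add: exp_add)
  also have "\<dots> \<le> exp (\<epsilon> * D + \<epsilon>)" using A by simp
  finally have B: "exp (\<epsilon> * x) * exp (- \<gamma> * \<mu> + \<gamma>^2 * \<sigma>^2 / 2) \<le> exp (\<epsilon> * D + \<epsilon>)" .
  have "exp (\<epsilon> * x) * exp (- \<gamma> * \<mu> + \<gamma>^2 * \<sigma>^2 / 2) * max Ph (1 - (1 - exp (- (\<epsilon> * a0 * h))) * p1)
      \<le> exp (\<epsilon> * D + \<epsilon>) * exp (- (\<epsilon> * (D + 2)))"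
    using B q Ph by (intro mult_mono) (auto simp: le_max_iff_disj)
  also have "\<dots> = exp (- \<epsilon>)" by (simp add: exp_add[symmetric] algebra_simps)
  finally show ?thesis .
qed

lemma alpha_bound:
  fixes \<alpha> :: "nat \<Rightarrow> real" and \<rho> :: real
  assumes "0 < \<rho>" "\<rho> < 1" and lim: "\<And>l. l > 0 \<Longrightarrow> (\<lambda>n. exp (- l * real n) * \<alpha> n) \<longlonglongrightarrow> 0"
  shows "\<exists>B r. B > 0 \<and> 0 < r \<and> r < 1 \<and> (\<forall>n. \<alpha> n * \<rho> ^ n \<le> B * r ^ n)"
proof -
  define l where "l = - ln \<rho> / 2"
  have l: "l > 0" using assms by (simp add: l_def)
  have "Bseq (\<lambda>n. exp (- l * real n) * \<alpha> n)" using lim[OF l] by (intro convergent_imp_Bseq) (auto simp: convergent_def)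
  then obtain B where B: "B > 0" "\<And>n. norm (exp (- l * real n) * \<alpha> n) \<le> B" by (auto elim: BseqE)
  define r where "r = exp (ln \<rho> / 2)"
  have r: "0 < r" "r < 1" using assms by (auto simp: r_def)
  have "\<alpha> n * \<rho> ^ n \<le> B * r ^ n" for n
  proof -
    have rn: "exp (l * real n) * \<rho> ^ n = r ^ n"
    proof -
      have "\<rho> ^ n = exp (real n * ln \<rho>)" using assms by (simp add: exp_of_nat_mult)
      then have "exp (l * real n) * \<rho> ^ n = exp (real n * (ln \<rho> / 2))"
        by (simp add: exp_add[symmetric] l_def algebra_simps)
      also have "\<dots> = r ^ n" unfolding r_def by (rule exp_of_nat_mult)
      finally show ?thesis .
    qed
    have "\<alpha> n * \<rho> ^ n = (exp (- l * real n) * \<alpha> n) * (exp (l * real n) * \<rho> ^ n)"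
      by (simp add: exp_minus field_simps)
    also have "\<dots> \<le> B * r ^ n" unfolding rn
      using B(2)[of n] r by (intro mult_right_mono) auto
    finally show ?thesis .
  qed
  then show ?thesis using B r by blast
qed

lemma distr_part:
  fixes M :: "'a measure" and Y :: "nat \<Rightarrow> 'a \<Rightarrow> real" and \<mu> \<sigma> :: real and N :: nat
  assumes M: "prob_space M" and ind: "prob_space.indep_vars M (\<lambda>_. borel) Y {1..}"
    and dist: "\<And>n. n \<ge> 1 \<Longrightarrow> distributed M lborel (Y n) (normal_density \<mu> \<sigma>)" and N: "N \<ge> 1"
  shows "\<exists>Z. Z \<in> measurable M (PiM {1..N} (\<lambda>_. borel))
     \<and> distr M (PiM {1..N} (\<lambda>_. borel)) Z = PiM {1..N} (\<lambda>_. density lborel (normal_density \<mu> \<sigma>))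
     \<and> (\<forall>\<omega>\<in>space M. \<forall>k\<in>{1..N}. Z \<omega> k = Y k \<omega>)"
proof -
  interpret prob_space M by (rule M)
  define Y' where "Y' i = (if 1 \<le> i then Y i else (\<lambda>_. 0))" for i
  have rv: "random_variable borel (Y' i)" for i
  proof (cases "1 \<le> i")
    case True
    have "Y i \<in> measurable M lborel" by (rule distributed_measurable[OF dist[OF True]])
    then show ?thesis using True by (simp add: Y'_def)
  qed (simp add: Y'_def)
  have "indep_vars (\<lambda>_. borel) Y {1..N}" using ind by (rule indep_vars_subset) auto
  then have indN: "indep_vars (\<lambda>_. borel) Y' {1..N}"
    by (rule indep_vars_cong[THEN iffD1, rotated 3]) (auto simp: Y'_def)
  define Z where "Z \<omega> = (\<lambda>i\<in>{1..N}. Y' i \<omega>)" for \<omega>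
  have Zm: "Z \<in> measurable M (PiM {1..N} (\<lambda>_. borel))" unfolding Z_def
    by (intro measurable_restrict rv)
  have "distr M (PiM {1..N} (\<lambda>_. borel)) Z = PiM {1..N} (\<lambda>i. distr M borel (Y' i))"
    unfolding Z_def using indep_vars_iff_distr_eq_PiM[where I="{1..N}" and M'="\<lambda>_. borel" and X=Y'] indN rv N by auto
  also have "\<dots> = PiM {1..N} (\<lambda>_. density lborel (normal_density \<mu> \<sigma>))"
  proof (rule PiM_cong)
    fix i assume "i \<in> {1..N}"
    then have i: "1 \<le> i" by simp
    have "distr M borel (Y' i) = distr M lborel (Y i)"
      using i by (intro distr_cong) (auto simp: Y'_def)
    also have "\<dots> = density lborel (normal_density \<mu> \<sigma>)" using dist[OF i] by (rule distributed_distr_eq_density)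
    finally show "distr M borel (Y' i) = density lborel (normal_density \<mu> \<sigma>)" .
  qed simp
  finally show ?thesis using Zm by (intro exI[of _ Z]) (auto simp: Z_def Y'_def)
qed

lemma lower_sum:
  fixes a v :: "nat \<Rightarrow> real"
  assumes a: "\<And>j. a j > 0" and v: "\<And>k. k \<in> {1..m} \<Longrightarrow> v k \<le> c" and c: "c \<le> 0" "a 0 * c \<le> x" and m: "m \<ge> 1"
  shows "(\<Sum>k\<in>{1..m}. a (m-k) * v k) \<le> x"
proof -
  have "(\<Sum>k\<in>{1..m}. a (m-k) * v k) = a (m - m) * v m + (\<Sum>k\<in>{1..m}-{m}. a (m-k) * v k)"
    using m by (subst sum.remove[of _ m]) auto
  moreover have "(\<Sum>k\<in>{1..m}-{m}. a (m-k) * v k) \<le> 0"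
  proof (intro sum_nonpos)
    fix k assume "k \<in> {1..m} - {m}"
    then have "v k \<le> 0" using v c by force
    then show "a (m-k) * v k \<le> 0" using a[of "m-k"] by (intro mult_nonneg_nonpos) auto
  qed
  moreover have "a 0 * v m \<le> a 0 * c" using v[of m] m a[of 0] by (intro mult_left_mono) auto
  ultimately show ?thesis using c by simp
qed

lemma prod_ind:
  fixes P :: "nat \<Rightarrow> bool"
  shows "(\<Prod>m\<in>{1..N}. if P m then 1 else (0::real)) = (if \<forall>m\<in>{1..N}. P m then 1 else 0)"
proof (cases "\<forall>m\<in>{1..N}. P m")
  case True
  then show ?thesis by (simp add: prod.neutral)
next
  case False
  then obtain m where m: "m \<in> {1..N}" "\<not> P m" by blast
  have "(\<Prod>m\<in>{1..N}. if P m then 1 else (0::real)) = 0"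
    by (rule prod_zero) (use m in auto)
  then show ?thesis using False by simp
qed

theorem mainTheorem13:
  fixes M :: "'a measure" and Y :: "nat \<Rightarrow> 'a \<Rightarrow> real"
    and \<alpha> :: "nat \<Rightarrow> real" and \<rho> \<mu> \<sigma> C x :: real
  assumes "prob_space M"
    and "prob_space.indep_vars M (\<lambda>_. borel) Y {1..}"
    and "\<sigma> > 0"
    and "\<And>n. n \<ge> 1 \<Longrightarrow> distributed M lborel (Y n) (normal_density \<mu> \<sigma>)"
    and "0 < \<rho>" and "\<rho> < 1"
    and "\<And>n. \<alpha> n > 0"
    and "\<And>n m. \<alpha> (n + m) \<le> C * \<alpha> n * \<alpha> m"
    and "\<And>l. l > 0 \<Longrightarrow> (\<lambda>n. exp (- l * real n) * \<alpha> n) \<longlonglongrightarrow> 0"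
  defines "X \<equiv> (\<lambda>n \<omega>. \<Sum>k=1..n. \<alpha> (n - k) * \<rho> ^ (n - k) * Y k \<omega>)"
  shows "liminf (\<lambda>N. ereal (- ln (measure M {\<omega> \<in> space M. \<forall>n\<in>{1..N}. X n \<omega> \<le> x}) / real N)) > 0"
proof -
  interpret prob_space M by (rule assms(1))
  have \<sigma>: "\<sigma> > 0" by (rule assms(3))
  define a where "a j = \<alpha> j * \<rho> ^ j" for j
  have apos: "a j > 0" for j unfolding a_def using assms(5,7) by simp
  obtain B r where B: "B > 0" and r: "0 < r" "r < 1" and aB: "\<And>n. a n \<le> B * r ^ n"
    using alpha_bound[OF assms(5,6,9)] unfolding a_def by blast
  define S where "S = B / (1 - r)"
  have S0: "S > 0" using B r by (simp add: S_def)
  have sumS: "a 0 + (\<Sum>m\<in>{n+1..N}. a (m - n)) \<le> S" for n N :: nat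
  proof -
    have "(\<Sum>m\<in>{n+1..N}. a (m - n)) = (\<Sum>j\<in>{1..N-n}. a j)"
      by (rule sum.reindex_bij_witness[where i="\<lambda>j. j + n" and j="\<lambda>m. m - n"]) auto
    then have "a 0 + (\<Sum>m\<in>{n+1..N}. a (m - n)) = (\<Sum>j\<in>{0..N-n}. a j)"
      by (simp add: sum.atLeast_Suc_atMost)
    also have "\<dots> \<le> (\<Sum>j\<in>{0..N-n}. B * r ^ j)" by (intro sum_mono aB)
    also have "\<dots> \<le> (\<Sum>j. B * r ^ j)"
      using r B by (intro sum_le_suminf summable_mult summable_geometric) auto
    also have "\<dots> = S" unfolding S_def using r by (simp add: suminf_mult suminf_geometric divide_inverse)
    finally show ?thesis .
  qed
  define Nd where "Nd = density lborel (normal_density \<mu> \<sigma>)"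
  have Nd_ps: "prob_space Nd" unfolding Nd_def by (rule prob_space_normal_density[OF \<sigma>])
  have Nd_sets: "sets Nd = sets borel" unfolding Nd_def by simp
  define N0 where "N0 = density lborel (normal_density 0 \<sigma>)"
  interpret N0: prob_space N0 unfolding N0_def by (rule prob_space_normal_density[OF \<sigma>])
  have N0_sets: "sets N0 = sets borel" unfolding N0_def by simp
  have mpos: "measure N0 {a<..<b} > 0" if "a < b" for a b
  proof -
    have "emeasure N0 {a<..<b} > 0" unfolding N0_def by (rule pos_interval[OF \<sigma> that])
    then show ?thesis by (simp add: N0.emeasure_eq_measure)
  qed
  define p1 where "p1 = measure N0 {..0}"
  have p1: "p1 > 0"
  proof -
    have "measure N0 {-1<..<0} \<le> measure N0 {..0}" by (intro N0.finite_measure_mono) (auto simp: N0_sets)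
    then show ?thesis using mpos[of "-1" 0] unfolding p1_def by simp
  qed
  define D where "D = \<bar>x\<bar> + S * \<bar>\<mu>\<bar>"
  have D0: "D \<ge> 0" unfolding D_def using S0 by simp
  define h where "h = 2 * (D + 2) / (a 0 * p1)"
  have h: "h > 0" unfolding h_def using D0 apos[of 0] p1 by simp
  define Ph where "Ph = measure N0 {..h}"
  have Ph0: "Ph \<ge> 0" by (simp add: Ph_def)
  have Ph1: "Ph < 1"
  proof -
    have "measure N0 ({..h} \<union> {h<..<h+1}) = measure N0 {..h} + measure N0 {h<..<h+1}"
      by (intro N0.finite_measure_Union) (auto simp: N0_sets)
    moreover have "measure N0 ({..h} \<union> {h<..<h+1}) \<le> 1" by simp
    ultimately show ?thesis using mpos[of h "h+1"] unfolding Ph_def by simp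
  qed
  define K2 where "K2 = S^2 * \<sigma>^2 / 2"
  have K2: "K2 \<ge> 0" by (simp add: K2_def)
  define \<epsilon> where "\<epsilon> = min (min (1 / (K2 + 1)) (1 / (a 0 * h))) ((1 - Ph) / (D + 2))"
  have \<epsilon>0: "\<epsilon> > 0" unfolding \<epsilon>_def using K2 apos[of 0] h Ph1 D0 by simp
  have c1: "\<epsilon> * (S^2 * \<sigma>^2 / 2) \<le> 1"
  proof -
    have "\<epsilon> \<le> 1 / (K2 + 1)" unfolding \<epsilon>_def by simp
    then have "\<epsilon> * (K2 + 1) \<le> 1" using K2 by (simp add: le_divide_eq)
    moreover have "\<epsilon> * K2 \<le> \<epsilon> * (K2 + 1)" using \<epsilon>0 by simp
    ultimately show ?thesis unfolding K2_def by linarith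
  qed
  have c2: "\<epsilon> * a 0 * h \<le> 1"
  proof -
    have "\<epsilon> \<le> 1 / (a 0 * h)" unfolding \<epsilon>_def by simp
    then show ?thesis using apos[of 0] h by (simp add: le_divide_eq mult.assoc)
  qed
  have c3: "\<epsilon> * (D + 2) \<le> 1 - Ph"
  proof -
    have "\<epsilon> \<le> (1 - Ph) / (D + 2)" unfolding \<epsilon>_def by simp
    then show ?thesis using D0 by (simp add: le_divide_eq)
  qed
  have c4: "a 0 * h * p1 = 2 * (D + 2)" unfolding h_def using apos[of 0] p1 by simp
  have H: "ennreal (exp (\<epsilon> * R)) * (\<integral>\<^sup>+t. ennreal ((if a 0 * t + R \<le> x then 1 else 0) * exp (- (\<epsilon> * (\<Sum>m\<in>{n+1..N}. a (m - n))) * t)) \<partial>Nd) \<le> ennreal (exp (- \<epsilon>))"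
    for n N :: nat and R :: real
  proof -
    define \<beta> where "\<beta> = \<epsilon> * (\<Sum>m\<in>{n+1..N}. a (m - n))"
    have \<beta>0: "\<beta> \<ge> 0" unfolding \<beta>_def using \<epsilon>0 apos by (intro mult_nonneg_nonneg sum_nonneg) (auto intro: less_imp_le)
    have g1: "\<beta> + \<epsilon> * a 0 \<le> \<epsilon> * S"
    proof -
      have "\<beta> + \<epsilon> * a 0 = \<epsilon> * (a 0 + (\<Sum>m\<in>{n+1..N}. a (m - n)))" unfolding \<beta>_def by (simp add: algebra_simps)
      also have "\<dots> \<le> \<epsilon> * S" using sumS[of n N] \<epsilon>0 by (intro mult_left_mono) auto
      finally show ?thesis .
    qed
    have g0: "0 \<le> \<beta> + \<epsilon> * a 0" using \<beta>0 \<epsilon>0 apos[of 0] by simp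
    have "ennreal (exp (\<epsilon> * R)) * (\<integral>\<^sup>+t. ennreal ((if a 0 * t + R \<le> x then 1 else 0) * exp (- \<beta> * t)) \<partial>Nd)
       \<le> ennreal (exp (\<epsilon> * x) * exp (- (\<beta> + \<epsilon> * a 0) * \<mu> + (\<beta> + \<epsilon> * a 0)^2 * \<sigma>^2 / 2)
        * max (measure N0 {..h}) (1 - (1 - exp (- (\<epsilon> * a 0 * h))) * measure N0 {..0}))"
      unfolding Nd_def N0_def by (rule step_bound[OF \<sigma> apos \<epsilon>0 less_imp_le[OF h]])
    also have "\<dots> \<le> ennreal (exp (- \<epsilon>))"
      unfolding Ph_def[symmetric] p1_def[symmetric]
      by (intro ennreal_leI final_ineq[OF g0 g1 \<epsilon>0 less_imp_le[OF S0] apos h less_imp_le[OF p1] Ph0 D_def c1 c2 c3 c4])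
    finally show ?thesis unfolding \<beta>_def .
  qed
  have mainb: "measure M {\<omega> \<in> space M. \<forall>n\<in>{1..N}. X n \<omega> \<le> x} \<le> exp (- \<epsilon>) ^ N
     \<and> measure M {\<omega> \<in> space M. \<forall>n\<in>{1..N}. X n \<omega> \<le> x} > 0" if N: "N \<ge> 1" for N
  proof -
    obtain Z where Zm: "Z \<in> measurable M (PiM {1..N} (\<lambda>_. borel))"
      and Zd: "distr M (PiM {1..N} (\<lambda>_. borel)) Z = PiM {1..N} (\<lambda>_. Nd)"
      and ZY: "\<And>\<omega> k. \<omega> \<in> space M \<Longrightarrow> k \<in> {1..N} \<Longrightarrow> Z \<omega> k = Y k \<omega>"
      using distr_part[OF assms(1,2,4) N] unfolding Nd_def by blast
    define PB where "PB = PiM {1..N} (\<lambda>_. borel :: real measure)"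
    define PN where "PN = PiM {1..N} (\<lambda>_. Nd)"
    interpret PN: prob_space PN unfolding PN_def by (intro prob_space_PiM Nd_ps)
    interpret ps: product_sigma_finite "\<lambda>_. Nd"
      unfolding product_sigma_finite_def using Nd_ps by (simp add: prob_space_imp_sigma_finite)
    have setsPN: "sets PN = sets PB" unfolding PN_def PB_def by (intro sets_PiM_cong) (auto simp: Nd_sets)
    have spacePN: "space PN = space PB" using setsPN by (rule sets_eq_imp_space_eq)
    define g where "g y = (\<Prod>m\<in>{1..N}. if (\<Sum>k\<in>{1..m}. a (m-k) * y k) \<le> x then 1 else (0::real)) * exp (- \<epsilon> * (\<Sum>m\<in>{N+1..N}. \<Sum>k\<in>{1..N}. a (m-k) * y k))" for y :: "nat \<Rightarrow> real"
    have gm: "g \<in> borel_measurable PB" unfolding g_def PB_def by (rule G_meas) simp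
    define E where "E = {y \<in> space PB. \<forall>m\<in>{1..N}. (\<Sum>k\<in>{1..m}. a (m-k) * y k) \<le> x}"
    have gE: "g y = indicator E y" if "y \<in> space PB" for y
    proof -
      have "g y = (\<Prod>m\<in>{1..N}. if (\<Sum>k\<in>{1..m}. a (m-k) * y k) \<le> x then 1 else (0::real))" unfolding g_def by simp
      also have "\<dots> = (if \<forall>m\<in>{1..N}. (\<Sum>k\<in>{1..m}. a (m-k) * y k) \<le> x then 1 else 0)" by (rule prod_ind)
      finally show ?thesis using that by (simp add: E_def indicator_def)
    qed
    have "E = g -` {1} \<inter> space PB" using gE by (auto simp: E_def indicator_def)
    then have Esets: "E \<in> sets PB" using measurable_sets[OF gm, of "{1}"] by simp
    have pre: "Z -` E \<inter> space M = {\<omega> \<in> space M. \<forall>n\<in>{1..N}. X n \<omega> \<le> x}"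
    proof -
      have "(\<Sum>k\<in>{1..m}. a (m-k) * Z \<omega> k) = X m \<omega>" if "\<omega> \<in> space M" "m \<in> {1..N}" for \<omega> m
        unfolding X_def a_def using that by (intro sum.cong) (auto simp: ZY)
      moreover have "Z \<omega> \<in> space PB" if "\<omega> \<in> space M" for \<omega> using measurable_space[OF Zm that] by (simp add: PB_def)
      ultimately show ?thesis by (auto simp: E_def)
    qed
    have PA: "measure M {\<omega> \<in> space M. \<forall>n\<in>{1..N}. X n \<omega> \<le> x} = measure PN E"
    proof -
      have "measure PN E = measure (distr M PB Z) E" using Zd by (simp add: PN_def PB_def)
      also have "\<dots> = measure M (Z -` E \<inter> space M)" using Zm Esets unfolding PB_def by (intro measure_distr) auto
      finally show ?thesis using pre by simp
    qed
    have "emeasure PN E = (\<integral>\<^sup>+y. indicator E y \<partial>PN)" using Esets setsPN by (simp add: nn_integral_indicator)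
    also have "\<dots> = (\<integral>\<^sup>+y. ennreal (g y) \<partial>PN)" by (intro nn_integral_cong) (auto simp: gE spacePN indicator_def)
    also have "\<dots> \<le> ennreal (exp (- \<epsilon>) ^ N)"
      unfolding g_def PN_def
      by (rule prod_bound[where a=a and N=N and \<epsilon>=\<epsilon> and x=x and \<theta>="exp (- \<epsilon>)" and Nd=Nd]) (use Nd_ps Nd_sets H in auto)
    finally have up: "measure PN E \<le> exp (- \<epsilon>) ^ N" by (simp add: PN.emeasure_eq_measure)
    define c where "c = min 0 (x / a 0)"
    have c: "c \<le> 0" "a 0 * c \<le> x"
    proof -
      show "c \<le> 0" by (simp add: c_def)
      have "a 0 * c \<le> a 0 * (x / a 0)" using apos[of 0] by (intro mult_left_mono) (auto simp: c_def)
      then show "a 0 * c \<le> x" using apos[of 0] by simp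
    qed
    define F where "F = PiE {1..N} (\<lambda>_. {..c})"
    have FPN: "F \<in> sets PN" unfolding F_def PN_def by (intro sets_PiM_I_finite) (auto simp: Nd_sets)
    have FPB: "F \<in> sets PB" using FPN setsPN by simp
    have "emeasure Nd {c-1<..<c} > 0" unfolding Nd_def by (rule pos_interval[OF \<sigma>]) simp
    moreover have "emeasure Nd {c-1<..<c} \<le> emeasure Nd {..c}" by (intro emeasure_mono) (auto simp: Nd_sets)
    ultimately have "emeasure Nd {..c} > 0" by simp
    then have ne: "emeasure Nd {..c} \<noteq> 0" by auto
    have "emeasure PN F = (\<Prod>i\<in>{1..N}. emeasure Nd {..c})" unfolding PN_def F_def
      by (subst ps.emeasure_PiM) (auto simp: Nd_sets)
    also have "\<dots> = emeasure Nd {..c} ^ N" by simp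
    finally have "emeasure PN F \<noteq> 0" using ne by simp
    then have "measure PN F \<noteq> 0" by (simp add: PN.emeasure_eq_measure)
    then have lowPN: "measure PN F > 0" using measure_nonneg[of PN F] by (simp add: less_le)
    have "measure PN F = measure M (Z -` F \<inter> space M)"
    proof -
      have "measure PN F = measure (distr M PB Z) F" using Zd by (simp add: PN_def PB_def)
      also have "\<dots> = measure M (Z -` F \<inter> space M)" using Zm FPB unfolding PB_def by (intro measure_distr) auto
      finally show ?thesis .
    qed
    also have "\<dots> \<le> measure M (Z -` E \<inter> space M)"
    proof (intro finite_measure_mono)
      show "Z -` E \<inter> space M \<in> sets M" using Zm Esets unfolding PB_def by (intro measurable_sets) auto
      show "Z -` F \<inter> space M \<subseteq> Z -` E \<inter> space M"
      proof
        fix \<omega> assume w: "\<omega> \<in> Z -` F \<inter> space M"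
        then have "Z \<omega> \<in> space PB" using measurable_space[OF Zm] by (simp add: PB_def)
        moreover have "(\<Sum>k\<in>{1..m}. a (m-k) * Z \<omega> k) \<le> x" if "m \<in> {1..N}" for m
          by (rule lower_sum[where a=a and v="Z \<omega>" and c=c]) (use that w c apos in \<open>auto simp: F_def\<close>)
        ultimately show "\<omega> \<in> Z -` E \<inter> space M" using w by (auto simp: E_def)
      qed
    qed
    finally show ?thesis using up PA pre lowPN by simp
  qed
  have ev: "eventually (\<lambda>N. ereal \<epsilon> \<le> ereal (- ln (measure M {\<omega> \<in> space M. \<forall>n\<in>{1..N}. X n \<omega> \<le> x}) / real N)) sequentially"
  proof (rule eventually_sequentiallyI[of 1])
    fix N :: nat assume N: "N \<ge> 1"
    define P where "P = measure M {\<omega> \<in> space M. \<forall>n\<in>{1..N}. X n \<omega> \<le> x}"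
    have P: "P \<le> exp (- \<epsilon>) ^ N" "P > 0" using mainb[OF N] unfolding P_def by auto
    have "exp (- \<epsilon>) ^ N = exp (- (\<epsilon> * real N))" by (simp add: exp_of_nat_mult[symmetric] mult.commute)
    then have "ln P \<le> ln (exp (- (\<epsilon> * real N)))" using P by (subst ln_le_cancel_iff) auto
    then have "ln P \<le> - (\<epsilon> * real N)" by simp
    then have "\<epsilon> * real N \<le> - ln P" by simp
    then have "\<epsilon> \<le> - ln P / real N" using N by (subst pos_le_divide_eq) auto
    then show "ereal \<epsilon> \<le> ereal (- ln P / real N)" by simp
  qed
  have "ereal \<epsilon> \<le> liminf (\<lambda>N. ereal (- ln (measure M {\<omega> \<in> space M. \<forall>n\<in>{1..N}. X n \<omega> \<le> x}) / real N))"
    by (rule Liminf_bounded[OF ev])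
  moreover have "(0::ereal) < ereal \<epsilon>" using \<epsilon>0 by simp
  ultimately show ?thesis by (rule order.strict_trans2[rotated])
qed

end
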